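(* Let $p$ be an odd prime, let $v$ be an integer with $1<v<p-1$, let $g\in\{2,\dots,p-1\}$ be a primitive root modulo $p$, let $t\ge1$ and $b\in\{0,\dots,v-1\}$. Let $$\rho(b,t)=\#\{i\in[1,p-1]:\ g^i\,\%\,p\not\equiv b,\ g^{i+t+1}\,\%\,p\not\equiv b,\ g^{i+j}\,\%\,p\equiv b\ (1\le j\le t)\},$$ all congruences modulo $v$. Write $p=q_t g^t+r_t$ and $p=q_{t+1}g^{t+1}+r_{t+1}$ with $0\le r_t<g^t$, $0\le r_{t+1}<g^{t+1}$. Then $$\left\lfloor\tfrac{g}{v}\right\rfloor^{t-1}\left\lfloor\tfrac{(v-1)g}{v}\right\rfloor\left\lfloor\tfrac{q_t}{v}\right\rfloor-\left\lceil\tfrac{g}{v}\right\rceil^{t}\left\lceil\tfrac{(v-1)g}{v}\right\rceil\left\lceil\tfrac{q_{t+1}+1}{v}\right\rceil\ \le\ \rho(b,t)\ \le\ \left\lceil\tfrac{g}{v}\right\rceil^{t-1}\left\lceil\tfrac{(v-1)g}{v}\right\rceil\left\lceil\tfrac{q_t+1}{v}\right\rceil-\left\lfloor\tfrac{g}{v}\right\rfloor^{t}\left\lfloor\tfrac{(v-1)g}{v}\right\rfloor\left\lfloor\tfrac{q_{t+1}}{v}\right\rfloor.$$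
   Context: $x\,\%\,p$ denotes the least nonnegative remainder of the integer $x$ modulo $p$. $\rho(b,t)$ counts runs of length exactly $t$ of symbol $b$ in the periodic sequence $((g^i\,\%\,p)\,\%\,v)_i$. *)

theory Defs
  imports Complex_Main "HOL-Number_Theory.Number_Theory"
begin

definition rho :: "nat \<Rightarrow> nat \<Rightarrow> nat \<Rightarrow> nat \<Rightarrow> nat \<Rightarrow> nat" where
  "rho p g v b t = card {i \<in> {1..p-1}.
      (g ^ i mod p) mod v \<noteq> b \<and>
      (g ^ (i + t + 1) mod p) mod v \<noteq> b \<and>
      (\<forall>j \<in> {1..t}. (g ^ (i + j) mod p) mod v = b)}"

end

theory Submission
  imports Defs
begin


lemma pow_inj:
  assumes "prime p" "residue_primroot p g"
  shows "inj_on (\<lambda>i. g ^ i mod p) {1..p-1}"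
proof (rule inj_onI)
  fix i j assume i: "i \<in> {1..p-1}" and j: "j \<in> {1..p-1}" and e: "g ^ i mod p = g ^ j mod p"
  have cop: "coprime p g" using assms by (simp add: residue_primroot_def)
  have ord: "ord p g = p - 1" using assms by (simp add: residue_primroot_def totient_prime)
  have "[g^i = g^j] (mod p)" using e by (simp add: cong_def)
  hence c: "[i = j] (mod p - 1)" using order_divides_expdiff[OF cop] ord by simp
  show "i = j"
  proof (rule ccontr)
    assume ne: "i \<noteq> j"
    show False
    proof (cases "i < j")
      case True
      hence "(p - 1) dvd (j - i)" using c cong_altdef_nat[of i j "p-1"] by (simp add: cong_sym_eq)
      moreover have "0 < j - i" "j - i < p - 1" using True i j by auto
      ultimately show False using nat_dvd_not_less by blast
    next
      case False
      hence "(p - 1) dvd (i - j)" using c cong_altdef_nat[of j i "p-1"] False by simp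
      moreover have "0 < i - j" "i - j < p - 1" using False ne i j by auto
      ultimately show False using nat_dvd_not_less by blast
    qed
  qed
qed

lemma pow_image:
  assumes "prime p" "residue_primroot p g"
  shows "(\<lambda>i. g ^ i mod p) ` {1..p-1} = {1..p-1}"
proof (rule card_subset_eq)
  have cop: "coprime p g" using assms by (simp add: residue_primroot_def)
  have p1: "p > 1" using assms prime_gt_1_nat by blast
  show "(\<lambda>i. g ^ i mod p) ` {1..p-1} \<subseteq> {1..p-1}"
  proof
    fix x assume "x \<in> (\<lambda>i. g ^ i mod p) ` {1..p-1}"
    then obtain i where x: "x = g ^ i mod p" by auto
    have "coprime p (g ^ i)" using cop by simp
    hence "\<not> p dvd g ^ i" using p1 coprime_common_divisor_nat[of p "g^i" p] by auto
    hence "x \<noteq> 0" using x by (simp add: dvd_eq_mod_eq_0)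
    moreover have "x < p" using x p1 by simp
    ultimately show "x \<in> {1..p-1}" by auto
  qed
  show "card ((\<lambda>i. g ^ i mod p) ` {1..p-1}) = card {1..p-1}"
    using card_image[OF pow_inj[OF assms]] by simp
qed simp

definition Xs :: "nat \<Rightarrow> nat \<Rightarrow> nat \<Rightarrow> nat \<Rightarrow> nat \<Rightarrow> nat set" where
  "Xs p g v b n = {x \<in> {1..p-1}. x mod v \<noteq> b \<and> (\<forall>j\<in>{1..n}. (g ^ j * x mod p) mod v = b)}"

lemma ball_Suc: "(\<forall>j\<in>{1..Suc n}. P j) \<longleftrightarrow> (\<forall>j\<in>{1..n}. P j) \<and> P (Suc n)"
  by (auto simp: le_Suc_eq) (use le_add1 in force)

lemma rho_diff:
  assumes "prime p" "residue_primroot p g"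
  shows "rho p g v b t = card (Xs p g v b t) - card (Xs p g v b (Suc t))"
proof -
  define f where "f = (\<lambda>i. g ^ i mod p)"
  define \<Phi> where "\<Phi> = (\<lambda>x. x mod v \<noteq> b \<and> (g ^ (t + 1) * x mod p) mod v \<noteq> b \<and>
      (\<forall>j \<in> {1..t}. (g ^ j * x mod p) mod v = b))"
  have sh: "g ^ (i + k) mod p = (g ^ k * f i) mod p" for i k
    by (simp add: f_def power_add mod_mult_right_eq mult.commute)
  have R: "{i \<in> {1..p-1}. (g ^ i mod p) mod v \<noteq> b \<and>
      (g ^ (i + t + 1) mod p) mod v \<noteq> b \<and>
      (\<forall>j \<in> {1..t}. (g ^ (i + j) mod p) mod v = b)} = {i \<in> {1..p-1}. \<Phi> (f i)}"
    unfolding \<Phi>_def using sh[of _ "t+1"] sh by (auto simp: f_def add.assoc)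
  have inj: "inj_on f {1..p-1}" using pow_inj[OF assms] by (simp add: f_def)
  have "rho p g v b t = card {i \<in> {1..p-1}. \<Phi> (f i)}" unfolding rho_def R ..
  also have "\<dots> = card (f ` {i \<in> {1..p-1}. \<Phi> (f i)})"
    by (rule card_image[symmetric]) (rule inj_on_subset[OF inj], auto)
  also have "f ` {i \<in> {1..p-1}. \<Phi> (f i)} = {x \<in> f ` {1..p-1}. \<Phi> x}" by auto
  also have "\<dots> = {x \<in> {1..p-1}. \<Phi> x}" using pow_image[OF assms] by (simp add: f_def)
  also have "\<dots> = Xs p g v b t - Xs p g v b (Suc t)"
    unfolding Xs_def \<Phi>_def ball_Suc by auto
  also have "card \<dots> = card (Xs p g v b t) - card (Xs p g v b (Suc t))"
    by (rule card_Diff_subset) (auto simp: Xs_def ball_Suc)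
  finally show ?thesis .
qed



lemma mod_inj_block:
  assumes "(x::nat) \<in> {lo..<lo+v}" "y \<in> {lo..<lo+v}" "x mod v = y mod v"
  shows "x = y"
proof (rule ccontr)
  assume ne: "x \<noteq> y"
  show False
  proof (cases "x < y")
    case True
    hence "v dvd y - x" using assms(3) mod_eq_dvd_iff_nat[of x y v] by simp
    moreover have "0 < y - x" "y - x < v" using True assms by auto
    ultimately show False using nat_dvd_not_less by blast
  next
    case False
    hence "v dvd x - y" using assms(3) mod_eq_dvd_iff_nat[of y x v] by simp
    moreover have "0 < x - y" "x - y < v" using False ne assms by auto
    ultimately show False using nat_dvd_not_less by blast
  qed
qed

lemma block_one:
  assumes "(v::nat) > 0" "r < v"
  shows "card {x\<in>{lo..<lo+v}. x mod v = r} = 1"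
proof -
  have inj: "inj_on (\<lambda>x. x mod v) {lo..<lo+v}"
  proof (rule inj_onI)
    fix x y assume "x \<in> {lo..<lo+v}" "y \<in> {lo..<lo+v}" "x mod v = y mod v"
    thus "x = y" by (rule mod_inj_block)
  qed
  have "(\<lambda>x. x mod v) ` {lo..<lo+v} = {..<v}"
  proof (rule card_subset_eq)
    show "(\<lambda>x. x mod v) ` {lo..<lo+v} \<subseteq> {..<v}" using assms by auto
    show "card ((\<lambda>x. x mod v) ` {lo..<lo+v}) = card {..<v}" using card_image[OF inj] by simp
  qed simp
  hence "r \<in> (\<lambda>x. x mod v) ` {lo..<lo+v}" using assms by simp
  then obtain x where x: "x \<in> {lo..<lo+v}" "x mod v = r" by blast
  have "{x\<in>{lo..<lo+v}. x mod v = r} = {x}"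
  proof (intro equalityI subsetI)
    fix y assume "y \<in> {x\<in>{lo..<lo+v}. x mod v = r}"
    hence "y \<in> {lo..<lo+v}" "y mod v = x mod v" using x by auto
    hence "y = x" using mod_inj_block[of y lo v x] x(1) by blast
    thus "y \<in> {x}" by simp
  qed (use x in auto)
  thus ?thesis by simp
qed

lemma class_count:
  assumes "(v::nat) > 0" "r < v"
  shows "L div v \<le> card {x\<in>{lo..<lo+L}. x mod v = r} \<and>
         card {x\<in>{lo..<lo+L}. x mod v = r} \<le> (L + v - 1) div v"
proof (induction L arbitrary: lo rule: less_induct)
  case (less L)
  show ?case
  proof (cases "L < v")
    case True
    have all: "\<forall>a\<in>{x\<in>{lo..<lo+L}. x mod v = r}. \<forall>c\<in>{x\<in>{lo..<lo+L}. x mod v = r}. a = c"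
    proof (intro ballI)
      fix a c assume a: "a \<in> {x\<in>{lo..<lo+L}. x mod v = r}" and c: "c \<in> {x\<in>{lo..<lo+L}. x mod v = r}"
      have "a \<in> {lo..<lo+v}" "c \<in> {lo..<lo+v}" using a c True by auto
      moreover have "a mod v = c mod v" using a c by simp
      ultimately show "a = c" by (rule mod_inj_block)
    qed
    have fin: "finite {x\<in>{lo..<lo+L}. x mod v = r}" by simp
    have "card {x\<in>{lo..<lo+L}. x mod v = r} \<le> Suc 0"
      by (rule iffD2[OF card_le_Suc0_iff_eq[OF fin] all])
    hence le1: "card {x\<in>{lo..<lo+L}. x mod v = r} \<le> 1" by simp
    show ?thesis
    proof (cases "L = 0")
      case True thus ?thesis by simp
    next
      case False
      hence "v \<le> L + v - 1" by simp
      hence "1 \<le> (L + v - 1) div v" using div_le_mono[of v "L+v-1" v] assms by simp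
      with le1 True show ?thesis by simp
    qed
  next
    case False
    have split: "{x\<in>{lo..<lo+L}. x mod v = r} =
       {x\<in>{lo..<lo+v}. x mod v = r} \<union> {x\<in>{lo+v..<(lo+v)+(L-v)}. x mod v = r}"
      using False by auto
    have c: "card {x\<in>{lo..<lo+L}. x mod v = r} = 1 + card {x\<in>{lo+v..<(lo+v)+(L-v)}. x mod v = r}"
    proof -
      have "card ({x\<in>{lo..<lo+v}. x mod v = r} \<union> {x\<in>{lo+v..<(lo+v)+(L-v)}. x mod v = r})
          = card {x\<in>{lo..<lo+v}. x mod v = r} + card {x\<in>{lo+v..<(lo+v)+(L-v)}. x mod v = r}"
        by (rule card_Un_disjoint) auto
      thus ?thesis unfolding split block_one[OF assms] .
    qed
    have IH: "(L - v) div v \<le> card {x\<in>{lo+v..<(lo+v)+(L-v)}. x mod v = r} \<and>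
         card {x\<in>{lo+v..<(lo+v)+(L-v)}. x mod v = r} \<le> (L - v + v - 1) div v"
      using less.IH[of "L - v" "lo + v"] False assms by simp
    have d1: "L div v = 1 + (L - v) div v" using False assms
      using div_add_self2[of v "L - v"] by simp
    have d2: "(L + v - 1) div v = 1 + (L - v + v - 1) div v" using False assms
      using div_add_self2[of v "L - v + v - 1"] by simp
    show ?thesis using c IH d1 d2 by simp
  qed
qed



lemma P_card:
  fixes p g v b :: nat
  assumes cop: "coprime p g" and g0: "g > 0" and v0: "v > 0" and bv: "b < v"
  shows "card {(d,r). d < g \<and> r < v \<and> (int g * int r - int p * int d) mod int v = int b} = g"
proof -
  define \<phi> where "\<phi> = (\<lambda>(d::nat,r::nat). nat ((int g * int r - int p * int d) mod (int g * int v)))"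
  define T where "T = {..<g} \<times> {..<v}"
  define P where "P = {(d,r). d < g \<and> r < v \<and> (int g * int r - int p * int d) mod int v = int b}"
  have gv0: "int g * int v > 0" using g0 v0 by simp
  have phi_int: "int (\<phi> (d,r)) = (int g * int r - int p * int d) mod (int g * int v)" for d r
    unfolding \<phi>_def using gv0 by simp
  have inj: "inj_on \<phi> T"
  proof (rule inj_onI)
    fix x y assume x: "x \<in> T" and y: "y \<in> T" and e: "\<phi> x = \<phi> y"
    obtain d r where xd: "x = (d,r)" by (cases x)
    obtain d' r' where yd: "y = (d',r')" by (cases y)
    have dr: "d < g" "r < v" "d' < g" "r' < v" using x y xd yd T_def by auto
    have "(int g * int r - int p * int d) mod (int g * int v) = (int g * int r' - int p * int d') mod (int g * int v)"
      using e phi_int[of d r] phi_int[of d' r'] xd yd by simp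
    hence dv: "int g * int v dvd (int g * int r - int p * int d) - (int g * int r' - int p * int d')"
      by (simp add: mod_eq_dvd_iff)
    have eq: "(int g * int r - int p * int d) - (int g * int r' - int p * int d') = int g * (int r - int r') + int p * (int d' - int d)"
      by (simp add: algebra_simps)
    have "int g dvd int g * (int r - int r') + int p * (int d' - int d)"
      using dv eq by (metis dvd_mult_left)
    hence "int g dvd int p * (int d' - int d)" by (simp add: dvd_add_right_iff)
    moreover have "coprime (int g) (int p)" using cop by (simp add: coprime_commute)
    ultimately have "int g dvd int d' - int d" using coprime_dvd_mult_right_iff by blast
    hence dd: "d' = d"
    proof -
      assume h: "int g dvd int d' - int d"
      show "d' = d"
      proof (rule ccontr)
        assume "d' \<noteq> d"
        hence "int d' - int d \<noteq> 0" by simp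
        from dvd_imp_le_int[OF this h] dr show False by simp
      qed
    qed
    hence "int g * int v dvd int g * (int r - int r')" using dv eq by simp
    hence "int v dvd int r - int r'" using g0 by simp
    hence "r = r'"
    proof -
      assume h: "int v dvd int r - int r'"
      show "r = r'"
      proof (rule ccontr)
        assume "r \<noteq> r'"
        hence "int r - int r' \<noteq> 0" by simp
        from dvd_imp_le_int[OF this h] dr show False by simp
      qed
    qed
    thus "x = y" using dd xd yd by simp
  qed
  have img: "\<phi> ` T = {..<g*v}"
  proof (rule card_subset_eq)
    show "\<phi> ` T \<subseteq> {..<g*v}"
    proof
      fix w assume "w \<in> \<phi> ` T"
      then obtain d r where w: "w = \<phi> (d,r)" by auto
      have "int w < int (g * v)" using phi_int[of d r] w gv0 by simp
      thus "w \<in> {..<g*v}" by (simp only: of_nat_less_iff lessThan_iff)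
    qed
    show "card (\<phi> ` T) = card {..<g*v}" using card_image[OF inj] by (simp add: T_def card_cartesian_product)
  qed simp
  have modv: "int (\<phi> (d,r) mod v) = (int g * int r - int p * int d) mod int v" for d r
  proof -
    have "int (\<phi> (d,r) mod v) = int (\<phi> (d,r)) mod int v" by (simp add: zmod_int)
    also have "\<dots> = (int g * int r - int p * int d) mod int v"
      unfolding phi_int by (rule mod_mod_cancel) simp
    finally show ?thesis .
  qed
  have PT: "P \<subseteq> T" unfolding P_def T_def by auto
  have "\<phi> ` P = {w \<in> {..<g*v}. w mod v = b}"
  proof (intro equalityI subsetI)
    fix w assume "w \<in> \<phi> ` P"
    then obtain d r where dr: "(d,r) \<in> P" and w: "w = \<phi> (d,r)" by auto
    have "w \<in> {..<g*v}" using img PT dr w by blast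
    moreover have "int (w mod v) = int b" using modv[of d r] dr w P_def by simp
    ultimately show "w \<in> {w \<in> {..<g*v}. w mod v = b}" by simp
  next
    fix w assume w: "w \<in> {w \<in> {..<g*v}. w mod v = b}"
    hence "w \<in> \<phi> ` T" using img by simp
    then obtain d r where dr: "(d,r) \<in> T" and wd: "w = \<phi> (d,r)" by auto
    have "(int g * int r - int p * int d) mod int v = int b" using modv[of d r] wd w by simp
    hence "(d,r) \<in> P" using dr by (simp add: P_def T_def)
    thus "w \<in> \<phi> ` P" using wd by blast
  qed
  hence "card P = card {w \<in> {..<g*v}. w mod v = b}"
    using card_image[OF inj_on_subset[OF inj PT]] by simp
  also have "{w \<in> {..<g*v}. w mod v = b} = {x\<in>{0..<0+g*v}. x mod v = b}" by auto
  also have "card \<dots> = g"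
  proof -
    have c: "(g*v) div v \<le> card {x\<in>{0..<0+g*v}. x mod v = b} \<and> card {x\<in>{0..<0+g*v}. x mod v = b} \<le> (g*v + v - 1) div v"
      by (rule class_count[OF v0 bv])
    have e: "g*v + v - 1 = (v - 1) + g * v" using v0 by simp
    have "(g*v + v - 1) div v = g" unfolding e using v0 div_mult_self1[of v "v-1" g] by simp
    thus ?thesis using c v0 by simp
  qed
  finally show ?thesis unfolding P_def .
qed



definition good :: "nat \<Rightarrow> nat \<Rightarrow> nat \<Rightarrow> nat \<Rightarrow> nat \<Rightarrow> nat \<Rightarrow> nat \<Rightarrow> bool" where
  "good p g v b n Q r \<longleftrightarrow> r \<noteq> b \<and>
     (\<forall>j\<in>{1..n}. (int (g^j) * int r - int p * int (Q div g^(n-j))) mod int v = int b)"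

definition Mset :: "nat \<Rightarrow> nat \<Rightarrow> nat \<Rightarrow> nat \<Rightarrow> nat \<Rightarrow> (nat \<times> nat) set" where
  "Mset p g v b n = {(Q,r). Q < g^n \<and> r < v \<and> good p g v b n Q r}"

definition Dset :: "nat \<Rightarrow> nat \<Rightarrow> nat \<Rightarrow> nat \<Rightarrow> nat set" where
  "Dset p g v b = {d. d < g \<and> (int g * int b - int p * int d) mod int v = int b}"

lemma div_shift:
  assumes "(g::nat) > 0" "d < g"
  shows "(Q * g + d) div g ^ Suc k = Q div g ^ k"
proof -
  have "(Q * g + d) div g ^ Suc k = (Q * g + d) div g div g ^ k"
    by (simp add: div_mult2_eq)
  also have "(Q * g + d) div g = Q" using assms by simp
  finally show ?thesis .
qed

lemma good_Suc:
  assumes g0: "g > 0" and dg: "d < g" and n1: "n \<ge> 1"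
  shows "good p g v b (Suc n) (Q * g + d) r \<longleftrightarrow>
         good p g v b n Q r \<and> (int g * int b - int p * int d) mod int v = int b"
proof -
  have A: "(\<forall>j\<in>{1..n}. (int (g^j) * int r - int p * int ((Q*g+d) div g^(Suc n-j))) mod int v = int b)
       \<longleftrightarrow> (\<forall>j\<in>{1..n}. (int (g^j) * int r - int p * int (Q div g^(n-j))) mod int v = int b)"
  proof -
    have "(Q*g+d) div g^(Suc n-j) = Q div g^(n-j)" if "j \<in> {1..n}" for j
    proof -
      have "Suc n - j = Suc (n - j)" using that by auto
      thus ?thesis using div_shift[OF g0 dg] by simp
    qed
    thus ?thesis by auto
  qed
  have B: "(int (g^Suc n) * int r - int p * int ((Q*g+d) div g^(Suc n - Suc n))) mod int v = int b
     \<longleftrightarrow> (int g * int b - int p * int d) mod int v = int b"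
    if h: "(int (g^n) * int r - int p * int (Q div g^(n-n))) mod int v = int b"
  proof -
    have e: "int (g^Suc n) * int r - int p * int ((Q*g+d) div g^(Suc n - Suc n))
        = int g * (int (g^n) * int r - int p * int Q) - int p * int d"
      by (simp add: algebra_simps)
    have "(int g * (int (g^n) * int r - int p * int Q) - int p * int d) mod int v
        = (int g * ((int (g^n) * int r - int p * int Q) mod int v) - int p * int d) mod int v"
      by (metis mod_diff_left_eq mod_mult_right_eq)
    also have "\<dots> = (int g * int b - int p * int d) mod int v" using h by simp
    finally show ?thesis using e by simp
  qed
  have "good p g v b (Suc n) (Q * g + d) r \<longleftrightarrow> r \<noteq> b \<and>
     (\<forall>j\<in>{1..n}. (int (g^j) * int r - int p * int ((Q*g+d) div g^(Suc n-j))) mod int v = int b) \<and>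
     (int (g^Suc n) * int r - int p * int ((Q*g+d) div g^(Suc n - Suc n))) mod int v = int b"
    unfolding good_def ball_Suc by blast
  also have "\<dots> \<longleftrightarrow> good p g v b n Q r \<and> (int g * int b - int p * int d) mod int v = int b"
  proof -
    have "n \<in> {1..n}" using n1 by simp
    thus ?thesis unfolding A good_def using B by blast
  qed
  finally show ?thesis .
qed

lemma Mset_Suc:
  assumes g0: "g > 0" and n1: "n \<ge> 1"
  shows "card (Mset p g v b (Suc n)) = card (Mset p g v b n) * card (Dset p g v b)"
proof -
  define h where "h = (\<lambda>((Q::nat,r::nat),d::nat). (Q * g + d, r))"
  have eq: "Mset p g v b (Suc n) = h ` (Mset p g v b n \<times> Dset p g v b)"
  proof (intro equalityI subsetI)
    fix x assume x: "x \<in> Mset p g v b (Suc n)"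
    obtain Q' r where xq: "x = (Q', r)" by (cases x)
    define Q where "Q = Q' div g"
    define d where "d = Q' mod g"
    have Q': "Q' = Q * g + d" by (simp add: Q_def d_def)
    have dg: "d < g" using g0 by (simp add: d_def)
    have "Q' < g ^ n * g" using x xq by (simp add: Mset_def mult.commute)
    hence Qn: "Q < g ^ n" using g0 by (simp add: Q_def div_less_iff_less_mult)
    have gs: "good p g v b (Suc n) (Q * g + d) r" "r < v" using x xq Q' by (auto simp: Mset_def)
    hence "good p g v b n Q r" "d \<in> Dset p g v b" using good_Suc[OF g0 dg n1] dg by (auto simp: Dset_def)
    hence "((Q, r), d) \<in> Mset p g v b n \<times> Dset p g v b" using Qn gs by (simp add: Mset_def)
    thus "x \<in> h ` (Mset p g v b n \<times> Dset p g v b)" using xq Q' h_def by force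
  next
    fix x assume "x \<in> h ` (Mset p g v b n \<times> Dset p g v b)"
    then obtain Q r d where x: "x = (Q * g + d, r)" and m: "(Q, r) \<in> Mset p g v b n" and d: "d \<in> Dset p g v b"
      unfolding h_def by auto
    have dg: "d < g" using d by (simp add: Dset_def)
    have "Q < g ^ n" using m by (simp add: Mset_def)
    hence "Q + 1 \<le> g ^ n" by simp
    hence "(Q + 1) * g \<le> g ^ n * g" by (rule mult_right_mono) simp
    hence "Q * g + d < g ^ Suc n" using dg by (simp add: algebra_simps)
    moreover have "good p g v b (Suc n) (Q * g + d) r" using good_Suc[OF g0 dg n1] m d by (simp add: Mset_def Dset_def)
    ultimately show "x \<in> Mset p g v b (Suc n)" using x m by (simp add: Mset_def)
  qed
  have inj: "inj_on h (Mset p g v b n \<times> Dset p g v b)"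
  proof (rule inj_onI)
    fix x y assume x: "x \<in> Mset p g v b n \<times> Dset p g v b" and y: "y \<in> Mset p g v b n \<times> Dset p g v b" and e: "h x = h y"
    obtain Q r d where xx: "x = ((Q,r),d)" by (metis prod.collapse)
    obtain Q2 r2 d2 where yy: "y = ((Q2,r2),d2)" by (metis prod.collapse)
    have dg: "d < g" "d2 < g" using x y xx yy by (auto simp: Dset_def)
    have e2: "Q * g + d = Q2 * g + d2" "r = r2" using e xx yy h_def by auto
    have "Q = Q2" using arg_cong[OF e2(1), of "\<lambda>z. z div g"] dg g0 by simp
    moreover have "d = d2" using arg_cong[OF e2(1), of "\<lambda>z. z mod g"] dg g0 by simp
    ultimately show "x = y" using xx yy e2 by simp
  qed
  show ?thesis unfolding eq card_image[OF inj] card_cartesian_product ..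
qed

lemma Mset_1:
  assumes cop: "coprime p g" and g0: "g > 0" and v0: "v > 0" and bv: "b < v"
  shows "card (Mset p g v b 1) = g - card (Dset p g v b)"
proof -
  define P where "P = {(d,r). d < g \<and> r < v \<and> (int g * int r - int p * int d) mod int v = int b}"
  have cP: "card P = g" unfolding P_def by (rule P_card[OF assms])
  have eq: "Mset p g v b 1 = P - (\<lambda>d. (d, b)) ` Dset p g v b"
    unfolding Mset_def P_def Dset_def good_def by auto
  have sub: "(\<lambda>d. (d, b)) ` Dset p g v b \<subseteq> P" unfolding P_def Dset_def using bv by auto
  have fin: "finite P" unfolding P_def by (rule finite_subset[of _ "{..<g} \<times> {..<v}"]) auto
  have "card ((\<lambda>d. (d, b)) ` Dset p g v b) = card (Dset p g v b)"
    by (rule card_image) (simp add: inj_on_def)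
  thus ?thesis unfolding eq card_Diff_subset[OF finite_subset[OF sub fin] sub] cP by simp
qed

lemma Mset_formula:
  assumes cop: "coprime p g" and g0: "g > 0" and v0: "v > 0" and bv: "b < v" and n1: "n \<ge> 1"
  shows "card (Mset p g v b n) = (g - card (Dset p g v b)) * card (Dset p g v b) ^ (n - 1)"
  using n1
proof (induction n rule: dec_induct)
  case base
  then show ?case using Mset_1[OF assms(1-4)] by simp
next
  case (step m)
  have pw: "card (Dset p g v b) ^ m = card (Dset p g v b) * card (Dset p g v b) ^ (m - 1)"
    using step(1) by (cases m) auto
  show ?case using Mset_Suc[OF g0 step(1), of p v b] step(3) pw by simp
qed



lemma Dset_bounds:
  fixes p g v b :: nat
  assumes cop: "coprime p v" and v0: "v > 0" and bv: "b < v"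
  shows "g div v \<le> card (Dset p g v b) \<and> card (Dset p g v b) \<le> (g + v - 1) div v"
proof -
  have "coprime (int p) (int v)" using cop by simp
  then obtain \<pi> where pi: "[int p * \<pi> = 1] (mod int v)" using cong_solve_coprime_int by blast
  hence pid: "int v dvd int p * \<pi> - 1" by (simp add: cong_iff_dvd_diff)
  define X where "X = int g * int b - int b"
  define c where "c = nat ((\<pi> * X) mod int v)"
  have c_int: "int c = (\<pi> * X) mod int v" unfolding c_def using v0 by simp
  have cv: "c < v" using c_int v0 by (metis of_nat_less_iff pos_mod_bound of_nat_0_less_iff)
  have key: "(int g * int b - int p * int d) mod int v = int b \<longleftrightarrow> d mod v = c" for d
  proof -
    have bb: "int b mod int v = int b" using bv by simp
    have "(int g * int b - int p * int d) mod int v = int b \<longleftrightarrow>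
          (int g * int b - int p * int d) mod int v = int b mod int v" using bb by simp
    also have "\<dots> \<longleftrightarrow> int v dvd X - int p * int d" unfolding mod_eq_dvd_iff X_def
      by (simp add: algebra_simps)
    also have "\<dots> \<longleftrightarrow> int v dvd int d - \<pi> * X"
    proof
      assume h: "int v dvd X - int p * int d"
      have "int d - \<pi> * X = - (\<pi> * (X - int p * int d)) - int d * (int p * \<pi> - 1)"
        by (simp add: algebra_simps)
      thus "int v dvd int d - \<pi> * X" using h pid by (metis dvd_diff dvd_minus_iff dvd_mult dvd_mult2)
    next
      assume h: "int v dvd int d - \<pi> * X"
      have "X - int p * int d = - (int p * (int d - \<pi> * X)) - X * (int p * \<pi> - 1)"
        by (simp add: algebra_simps)
      thus "int v dvd X - int p * int d" using h pid by (metis dvd_diff dvd_minus_iff dvd_mult dvd_mult2)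
    qed
    also have "\<dots> \<longleftrightarrow> int d mod int v = (\<pi> * X) mod int v" by (simp add: mod_eq_dvd_iff)
    also have "\<dots> \<longleftrightarrow> d mod v = c" using c_int by (metis of_nat_eq_iff zmod_int)
    finally show ?thesis .
  qed
  have "Dset p g v b = {x\<in>{0..<0+g}. x mod v = c}" unfolding Dset_def using key by auto
  thus ?thesis using class_count[OF v0 cv, of g 0] by simp
qed



lemma ceil_le:
  assumes "(G::nat) > 0"
  shows "(a + G - 1) div G \<le> x \<longleftrightarrow> a \<le> G * x"
proof -
  have "(a + G - 1) div G \<le> x \<longleftrightarrow> (a + G - 1) div G < Suc x" by (rule less_Suc_eq_le[symmetric])
  also have "\<dots> \<longleftrightarrow> a + G - 1 < Suc x * G" using div_less_iff_less_mult[OF assms] by blast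
  also have "\<dots> \<longleftrightarrow> a \<le> G * x" using assms by (simp add: algebra_simps) arith
  finally show ?thesis .
qed

lemma div_eq_iff_range:
  assumes "(p::nat) > 0"
  shows "a div p = Q \<longleftrightarrow> Q * p \<le> a \<and> a < Suc Q * p"
proof -
  have "a div p = Q \<longleftrightarrow> \<not> (a div p < Q) \<and> a div p < Suc Q" by auto
  also have "\<dots> \<longleftrightarrow> \<not> (a < Q * p) \<and> a < Suc Q * p" using div_less_iff_less_mult[OF assms] by blast
  finally show ?thesis by auto
qed

lemma fibre_interval:
  assumes G0: "(G::nat) > 0" and p0: "p > 0" and QG: "Q < G"
  shows "{x. x < p \<and> G * x div p = Q} = {(Q*p + G - 1) div G ..< (Q*p + p + G - 1) div G}"
proof (intro equalityI subsetI)
  fix x assume "x \<in> {x. x < p \<and> G * x div p = Q}"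
  hence "Q * p \<le> G * x" "G * x < Suc Q * p" using div_eq_iff_range[OF p0] by auto
  moreover have "(Q*p + G - 1) div G \<le> x \<longleftrightarrow> Q*p \<le> G * x" by (rule ceil_le[OF G0])
  moreover have "(Q*p + p + G - 1) div G \<le> x \<longleftrightarrow> Q*p + p \<le> G * x" by (rule ceil_le[OF G0])
  ultimately show "x \<in> {(Q*p + G - 1) div G ..< (Q*p + p + G - 1) div G}" by auto
next
  fix x assume "x \<in> {(Q*p + G - 1) div G ..< (Q*p + p + G - 1) div G}"
  moreover have "(Q*p + G - 1) div G \<le> x \<longleftrightarrow> Q*p \<le> G * x" by (rule ceil_le[OF G0])
  moreover have "(Q*p + p + G - 1) div G \<le> x \<longleftrightarrow> Q*p + p \<le> G * x" by (rule ceil_le[OF G0])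
  ultimately have h: "Q*p \<le> G * x" "G * x < Suc Q * p" by auto
  have "Suc Q * p \<le> G * p" using QG by (intro mult_right_mono) auto
  hence "G * x < G * p" using h by (simp only: mult_Suc)
  hence "x < p" using mult_less_cancel1[of G x p] by simp
  thus "x \<in> {x. x < p \<and> G * x div p = Q}" using h div_eq_iff_range[OF p0] by auto
qed

lemma interval_len:
  assumes G0: "(G::nat) > 0"
  shows "p div G \<le> (c + p) div G - c div G \<and> (c + p) div G - c div G \<le> p div G + 1"
proof -
  have e: "(c + p) div G = c div G + p div G + (c mod G + p mod G) div G" by (rule div_add1_eq)
  have "c mod G < G" "p mod G < G" using G0 by simp_all
  hence "c mod G + p mod G < 2 * G" by linarith
  hence "(c mod G + p mod G) div G < 2" using G0 by (simp add: div_less_iff_less_mult)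
  thus ?thesis using e by simp
qed



lemma cond_eq:
  fixes p g v x j n :: nat
  assumes p0: "p > 0" and g0: "g > 0" and jn: "j \<le> n"
  shows "int ((g^j*x mod p) mod v) = (int (g^j) * int (x mod v) - int p * int ((g^n*x div p) div g^(n-j))) mod int v"
proof -
  have "g^n = g^(n-j) * g^j" using jn by (metis le_add_diff_inverse2 power_add)
  hence gn: "g^n*x = g^(n-j) * (g^j*x)" by (simp add: mult.assoc)
  have gp: "g^(n-j) > 0" using g0 by simp
  have k: "g^n*x div p div g^(n-j) = g^j*x div p"
  proof -
    have "g^n*x div p div g^(n-j) = (g^j*x * g^(n-j)) div (p * g^(n-j))"
      unfolding gn div_mult2_eq[symmetric] by (simp only: mult.commute)
    also have "\<dots> = g^j*x div p" using g0 by (intro div_mult_mult2) simp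
    finally show ?thesis .
  qed
  have m: "int (g^j*x mod p) = int (g^j) * int x - int p * int (g^j*x div p)"
  proof -
    have "g^j*x div p * p + g^j*x mod p = g^j*x" by (rule div_mult_mod_eq)
    hence "int (g^j*x div p) * int p + int (g^j*x mod p) = int (g^j) * int x"
      unfolding of_nat_mult[symmetric] of_nat_add[symmetric] of_nat_eq_iff .
    thus ?thesis by (simp add: algebra_simps)
  qed
  have "int ((g^j*x mod p) mod v) = int (g^j*x mod p) mod int v" by (simp add: zmod_int)
  also have "\<dots> = (int (g^j) * int x - int p * int (g^j*x div p)) mod int v" using m by simp
  also have "\<dots> = (int (g^j) * (int x mod int v) - int p * int (g^j*x div p)) mod int v"
    by (metis mod_diff_left_eq mod_mult_right_eq)
  also have "\<dots> = (int (g^j) * int (x mod v) - int p * int ((g^n*x div p) div g^(n-j))) mod int v"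
    using k by (simp add: zmod_int)
  finally show ?thesis .
qed

lemma Xs_good:
  fixes p g v b n :: nat
  assumes p0: "p > 0" and g0: "g > 0" and n1: "n \<ge> 1"
  shows "Xs p g v b n = {x. x < p \<and> good p g v b n (g^n*x div p) (x mod v)}"
proof -
  have c: "(g^j*x mod p) mod v = b \<longleftrightarrow>
        (int (g^j) * int (x mod v) - int p * int ((g^n*x div p) div g^(n-j))) mod int v = int b"
    if "j \<in> {1..n}" for j x
  proof -
    have "j \<le> n" using that by simp
    hence e: "int ((g^j*x mod p) mod v) = (int (g^j) * int (x mod v) - int p * int ((g^n*x div p) div g^(n-j))) mod int v"
      by (rule cond_eq[OF p0 g0])
    show ?thesis by (simp only: e[symmetric] of_nat_eq_iff)
  qed
  have z: "\<not> good p g v b n (g^n*0 div p) (0 mod v)"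
  proof
    assume h: "good p g v b n (g^n*0 div p) (0 mod v)"
    have "1 \<in> {1..n}" using n1 by simp
    thus False using h by (auto simp: good_def)
  qed
  show ?thesis
  proof (intro equalityI subsetI)
    fix x assume "x \<in> Xs p g v b n"
    thus "x \<in> {x. x < p \<and> good p g v b n (g^n*x div p) (x mod v)}"
      unfolding Xs_def good_def using c by auto
  next
    fix x assume x: "x \<in> {x. x < p \<and> good p g v b n (g^n*x div p) (x mod v)}"
    have "x \<noteq> 0"
    proof
      assume "x = 0" with x z show False by simp
    qed
    thus "x \<in> Xs p g v b n" using x unfolding Xs_def good_def using c by auto
  qed
qed

lemma Xs_bounds:
  fixes p g v b n :: nat
  assumes p0: "p > 0" and g0: "g > 0" and v0: "v > 0" and n1: "n \<ge> 1"
  defines "q \<equiv> p div g^n"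
  shows "card (Mset p g v b n) * (q div v) \<le> card (Xs p g v b n) \<and>
         card (Xs p g v b n) \<le> card (Mset p g v b n) * ((q + v) div v)"
proof -
  define G where "G = g^n"
  have G0: "G > 0" using g0 by (simp add: G_def)
  define E where "E = (\<lambda>(Q,r). {x. x < p \<and> G*x div p = Q \<and> x mod v = r})"
  have finM: "finite (Mset p g v b n)"
    by (rule finite_subset[of _ "{..<g^n} \<times> {..<v}"]) (auto simp: Mset_def)
  have U: "Xs p g v b n = \<Union> (E ` Mset p g v b n)"
  proof (intro equalityI subsetI)
    fix x assume "x \<in> Xs p g v b n"
    hence x: "x < p" "good p g v b n (G*x div p) (x mod v)" using Xs_good[OF p0 g0 n1] G_def by auto
    have "G*x < G*p" using x G0 by simp
    hence "G*x div p < G" using p0 by (simp add: div_less_iff_less_mult mult.commute)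
    hence "(G*x div p, x mod v) \<in> Mset p g v b n" using x v0 by (simp add: Mset_def G_def)
    moreover have "x \<in> E (G*x div p, x mod v)" using x by (simp add: E_def)
    ultimately show "x \<in> \<Union> (E ` Mset p g v b n)" by blast
  next
    fix x assume "x \<in> \<Union> (E ` Mset p g v b n)"
    then obtain Q r where m: "(Q,r) \<in> Mset p g v b n" and x: "x \<in> E (Q,r)" by auto
    have "x < p" "G*x div p = Q" "x mod v = r" using x by (auto simp: E_def)
    thus "x \<in> Xs p g v b n" using m Xs_good[OF p0 g0 n1] G_def by (auto simp: Mset_def)
  qed
  have cardX: "card (Xs p g v b n) = (\<Sum>i\<in>Mset p g v b n. card (E i))"
    unfolding U
  proof (rule card_UN_disjoint[OF finM])
    show "\<forall>i\<in>Mset p g v b n. finite (E i)"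
    proof
      fix i show "finite (E i)" by (cases i) (auto simp: E_def)
    qed
    show "\<forall>i\<in>Mset p g v b n. \<forall>j\<in>Mset p g v b n. i \<noteq> j \<longrightarrow> E i \<inter> E j = {}"
      by (auto simp: E_def)
  qed
  have bnd: "q div v \<le> card (E i) \<and> card (E i) \<le> (q + v) div v" if i: "i \<in> Mset p g v b n" for i
  proof -
    obtain Q r where ir: "i = (Q,r)" by (cases i)
    have QG: "Q < G" and rv: "r < v" using i ir by (auto simp: Mset_def G_def)
    define c where "c = Q*p + G - 1"
    define lo where "lo = c div G"
    define hi where "hi = (c + p) div G"
    have hic: "Q*p + p + G - 1 = c + p" using G0 by (simp add: c_def)
    have fi: "{x. x < p \<and> G * x div p = Q} = {lo..<hi}"
      using fibre_interval[OF G0 p0 QG] unfolding hic c_def[symmetric] lo_def[symmetric] hi_def[symmetric] .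
    have lohi: "lo \<le> hi" unfolding lo_def hi_def by (rule div_le_mono) simp
    have len: "p div G \<le> hi - lo \<and> hi - lo \<le> p div G + 1"
      unfolding lo_def hi_def by (rule interval_len[OF G0])
    have qG: "q = p div G" by (simp add: q_def G_def)
    have "E i = {x. x < p \<and> G*x div p = Q \<and> x mod v = r}" by (simp add: E_def ir)
    also have "\<dots> = {x \<in> {x. x < p \<and> G*x div p = Q}. x mod v = r}" by blast
    also have "\<dots> = {x\<in>{lo..<lo+(hi-lo)}. x mod v = r}" unfolding fi using lohi by simp
    finally have Ei: "E i = {x\<in>{lo..<lo+(hi-lo)}. x mod v = r}" .
    have cc: "(hi-lo) div v \<le> card (E i) \<and> card (E i) \<le> ((hi-lo) + v - 1) div v"
      unfolding Ei by (rule class_count[OF v0 rv])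
    have "q div v \<le> (hi-lo) div v" using len qG by (simp add: div_le_mono)
    moreover have "((hi-lo) + v - 1) div v \<le> (q + v) div v"
    proof (rule div_le_mono)
      show "(hi-lo) + v - 1 \<le> q + v" using len qG by linarith
    qed
    ultimately show ?thesis using cc by linarith
  qed
  have "card (Mset p g v b n) * (q div v) \<le> (\<Sum>i\<in>Mset p g v b n. card (E i))"
    using sum_bounded_below[of "Mset p g v b n" "q div v" "\<lambda>i. card (E i)"] bnd by simp
  moreover have "(\<Sum>i\<in>Mset p g v b n. card (E i)) \<le> card (Mset p g v b n) * ((q + v) div v)"
    using sum_bounded_above[of "Mset p g v b n" "\<lambda>i. card (E i)" "(q + v) div v"] bnd by simp
  ultimately show ?thesis using cardX by simp
qed



lemma ceil_nat_div:
  fixes a v :: nat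
  assumes v0: "v > 0"
  shows "\<lceil>real a / real v\<rceil> = int ((a + v - 1) div v)"
proof -
  define k where "k = (a + v - 1) div v"
  have k1: "k * v \<le> a + v - 1" unfolding k_def by (rule div_times_less_eq_dividend)
  have k2: "a + v - 1 < (k + 1) * v" unfolding k_def using v0
    by (metis div_less_iff_less_mult less_add_one)
  have u: "a \<le> k * v" using k2 v0 by (simp add: algebra_simps)
  have l: "k * v < a + v" using k1 v0 by linarith
  have "real a \<le> real k * real v" using of_nat_le_iff[of a "k*v", where 'a=real] u by simp
  hence h1: "real a / real v \<le> real k" using v0 by (simp add: divide_le_eq)
  have "real k * real v < real a + real v" using of_nat_less_iff[of "k*v" "a+v", where 'a=real] l by simp
  hence "real k - 1 < real a / real v" using v0 by (simp add: less_divide_eq algebra_simps)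
  hence "\<lceil>real a / real v\<rceil> = int k" using h1 by (intro ceiling_unique) simp_all
  thus ?thesis by (simp add: k_def)
qed

lemma floor_vm1:
  fixes g v :: nat
  assumes v0: "v > 0"
  shows "\<lfloor>real ((v - 1) * g) / real v\<rfloor> = int g - \<lceil>real g / real v\<rceil>"
    and "\<lceil>real ((v - 1) * g) / real v\<rceil> = int g - \<lfloor>real g / real v\<rfloor>"
proof -
  have e: "real ((v - 1) * g) / real v = - (real g / real v) + of_int (int g)"
    using v0 by (simp add: of_nat_diff field_simps)
  show "\<lfloor>real ((v - 1) * g) / real v\<rfloor> = int g - \<lceil>real g / real v\<rceil>"
    unfolding e floor_add_int[symmetric] by (simp add: ceiling_def)
  show "\<lceil>real ((v - 1) * g) / real v\<rceil> = int g - \<lfloor>real g / real v\<rfloor>"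
    unfolding e ceiling_add_of_int by (simp add: ceiling_def)
qed



theorem corollary8:
  fixes p v g t b :: nat
  assumes "prime p" and "odd p"
    and "1 < v" and "v < p - 1"
    and "g \<in> {2..p-1}" and "residue_primroot p g"
    and "t \<ge> 1" and "b \<in> {0..v-1}"
  defines "q1 \<equiv> p div g ^ t" and "q2 \<equiv> p div g ^ (t + 1)"
  shows "\<lfloor>real g / real v\<rfloor> ^ (t - 1) * \<lfloor>real ((v - 1) * g) / real v\<rfloor> * \<lfloor>real q1 / real v\<rfloor>
           - \<lceil>real g / real v\<rceil> ^ t * \<lceil>real ((v - 1) * g) / real v\<rceil> * \<lceil>real (q2 + 1) / real v\<rceil>
         \<le> int (rho p g v b t) \<and>
         int (rho p g v b t)
         \<le> \<lceil>real g / real v\<rceil> ^ (t - 1) * \<lceil>real ((v - 1) * g) / real v\<rceil> * \<lceil>real (q1 + 1) / real v\<rceil>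
           - \<lfloor>real g / real v\<rfloor> ^ t * \<lfloor>real ((v - 1) * g) / real v\<rfloor> * \<lfloor>real q2 / real v\<rfloor>"
proof -
  have p1: "p > 1" using assms(1) prime_gt_1_nat by blast
  hence p0: "p > 0" by simp
  have g0: "g > 0" and gp: "g < p" using assms(5) p1 by auto
  have v0: "v > 0" using assms(3) by simp
  have bv: "b < v" using assms(8) assms(3) by auto
  have copg: "coprime p g" using assms(6) by (simp add: residue_primroot_def)
  have copv: "coprime p v"
  proof -
    have "\<not> p dvd v" using v0 assms(4) by (auto dest: dvd_imp_le)
    thus ?thesis using assms(1) by (simp add: prime_imp_coprime)
  qed
  define D where "D = card (Dset p g v b)"
  define F where "F = g div v"
  define C where "C = (g + v - 1) div v"
  have FDC: "F \<le> D" "D \<le> C" using Dset_bounds[OF copv v0 bv, of g] by (simp_all add: D_def F_def C_def)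
  have Cg: "C \<le> g"
  proof -
    have a1: "(g - 1) * 1 \<le> (g - 1) * v" using v0 by (intro mult_le_mono) auto
    have a2: "g * v = (g - 1) * v + v" using g0 by (cases g) auto
    have "g + v - 1 \<le> g * v" using a1 a2 g0 by linarith
    hence "(g + v - 1) div v \<le> g * v div v" by (rule div_le_mono)
    thus ?thesis using v0 by (simp add: C_def)
  qed
  have t2: "Suc t \<ge> 1" by simp
  have Mt: "card (Mset p g v b t) = (g - D) * D ^ (t - 1)"
    using Mset_formula[OF copg g0 v0 bv assms(7)] by (simp add: D_def)
  have Mt1: "card (Mset p g v b (Suc t)) = (g - D) * D ^ t"
    using Mset_formula[OF copg g0 v0 bv t2] by (simp add: D_def)
  have Xt: "card (Mset p g v b t) * (q1 div v) \<le> card (Xs p g v b t) \<and>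
         card (Xs p g v b t) \<le> card (Mset p g v b t) * ((q1 + v) div v)"
    using Xs_bounds[OF p0 g0 v0 assms(7)] by (simp add: q1_def)
  have Xt1: "card (Mset p g v b (Suc t)) * (q2 div v) \<le> card (Xs p g v b (Suc t)) \<and>
         card (Xs p g v b (Suc t)) \<le> card (Mset p g v b (Suc t)) * ((q2 + v) div v)"
    using Xs_bounds[OF p0 g0 v0 t2] by (simp add: q2_def)
  define At where "At = card (Xs p g v b t)"
  define At1 where "At1 = card (Xs p g v b (Suc t))"
  have sub: "At1 \<le> At" unfolding At_def At1_def
    by (rule card_mono) (auto simp: Xs_def ball_Suc)
  have rho: "int (rho p g v b t) = int At - int At1"
    using rho_diff[OF assms(1) assms(6), of v b t] sub by (simp add: At_def At1_def)
  have L1: "F ^ (t - 1) * (g - C) * (q1 div v) \<le> At"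
  proof -
    have "F ^ (t - 1) * (g - C) * (q1 div v) \<le> D ^ (t - 1) * (g - D) * (q1 div v)"
      using FDC by (intro mult_le_mono power_mono) auto
    moreover have "card (Mset p g v b t) * (q1 div v) = D ^ (t - 1) * (g - D) * (q1 div v)"
      unfolding Mt by (simp add: ac_simps)
    ultimately show ?thesis using Xt unfolding At_def by linarith
  qed
  have U1: "At \<le> C ^ (t - 1) * (g - F) * ((q1 + v) div v)"
  proof -
    have "D ^ (t - 1) * (g - D) * ((q1 + v) div v) \<le> C ^ (t - 1) * (g - F) * ((q1 + v) div v)"
      using FDC by (intro mult_le_mono power_mono) auto
    moreover have "card (Mset p g v b t) * ((q1 + v) div v) = D ^ (t - 1) * (g - D) * ((q1 + v) div v)"
      unfolding Mt by (simp add: ac_simps)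
    ultimately show ?thesis using Xt unfolding At_def by linarith
  qed
  have L2: "F ^ t * (g - C) * (q2 div v) \<le> At1"
  proof -
    have "F ^ t * (g - C) * (q2 div v) \<le> D ^ t * (g - D) * (q2 div v)"
      using FDC by (intro mult_le_mono power_mono) auto
    moreover have "card (Mset p g v b (Suc t)) * (q2 div v) = D ^ t * (g - D) * (q2 div v)"
      unfolding Mt1 by (simp add: ac_simps)
    ultimately show ?thesis using Xt1 unfolding At1_def by linarith
  qed
  have U2: "At1 \<le> C ^ t * (g - F) * ((q2 + v) div v)"
  proof -
    have "D ^ t * (g - D) * ((q2 + v) div v) \<le> C ^ t * (g - F) * ((q2 + v) div v)"
      using FDC by (intro mult_le_mono power_mono) auto
    moreover have "card (Mset p g v b (Suc t)) * ((q2 + v) div v) = D ^ t * (g - D) * ((q2 + v) div v)"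
      unfolding Mt1 by (simp add: ac_simps)
    ultimately show ?thesis using Xt1 unfolding At1_def by linarith
  qed
  have fF: "\<lfloor>real g / real v\<rfloor> = int F" unfolding F_def by (rule floor_divide_of_nat_eq)
  have cC: "\<lceil>real g / real v\<rceil> = int C" unfolding C_def by (rule ceil_nat_div[OF v0])
  have fG: "\<lfloor>real ((v - 1) * g) / real v\<rfloor> = int (g - C)"
    using floor_vm1(1)[OF v0, of g] cC Cg by simp
  have cG: "\<lceil>real ((v - 1) * g) / real v\<rceil> = int (g - F)"
  proof -
    have "F \<le> g" using FDC Cg by simp
    thus ?thesis using floor_vm1(2)[OF v0, of g] fF by simp
  qed
  have fq1: "\<lfloor>real q1 / real v\<rfloor> = int (q1 div v)" by (rule floor_divide_of_nat_eq)
  have fq2: "\<lfloor>real q2 / real v\<rfloor> = int (q2 div v)" by (rule floor_divide_of_nat_eq)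
  have cq1: "\<lceil>real (q1 + 1) / real v\<rceil> = int ((q1 + v) div v)"
    using ceil_nat_div[OF v0, of "q1 + 1"] by simp
  have cq2: "\<lceil>real (q2 + 1) / real v\<rceil> = int ((q2 + v) div v)"
    using ceil_nat_div[OF v0, of "q2 + 1"] by simp
  have iL1: "int F ^ (t - 1) * int (g - C) * int (q1 div v) \<le> int At"
    using L1 by (metis of_nat_le_iff of_nat_mult of_nat_power)
  have iU1: "int At \<le> int C ^ (t - 1) * int (g - F) * int ((q1 + v) div v)"
    using U1 by (metis of_nat_le_iff of_nat_mult of_nat_power)
  have iL2: "int F ^ t * int (g - C) * int (q2 div v) \<le> int At1"
    using L2 by (metis of_nat_le_iff of_nat_mult of_nat_power)
  have iU2: "int At1 \<le> int C ^ t * int (g - F) * int ((q2 + v) div v)"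
    using U2 by (metis of_nat_le_iff of_nat_mult of_nat_power)
  show ?thesis
    unfolding rho fF cC fG cG fq1 fq2 cq1 cq2
    using iL1 iU1 iL2 iU2 by linarith
qed

end
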